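(* Let $\mathbf x\in\mathcal D^m$ and $\mathbf q_n(t)=\sum_{i:\,t^n_i\le t}(\mathbf{x}(t^n_{i+1})-\mathbf{x}(t^n_i))(\mathbf{x}(t^n_{i+1})-\mathbf{x}(t^n_i))^T$. Then $(\mathbf q_n)$ converges in $(\mathcal D^{m\times m},d)$ if and only if it converges in the product space $(\mathcal D,d)^{m\times m}$ (i.e. each entry converges in $(\mathcal D,d)$).
   Context: Let $\pi=(\pi_n)_{n\ge1}$ be a sequence of partitions $\pi_n=(t^n_0,\dots,t^n_{k_n})$ with $0=t^n_0<\dots<t^n_{k_n}<\infty$, $t^n_{k_n}\uparrow\infty$, and mesh tending to $0$ on compacts; sums over $i$ run over $0\le i<k_n$. $\mathcal{D}$, $\mathcal{D}^m$, $\mathcal{D}^{m\times m}$ denote the spaces of càdlàg functions $[0,\infty)\to\mathbb{R}$, $\mathbb R^m$, $\mathbb{R}^{m\times m}$, each with a metric $d$ inducing its Skorokhod $J_1$ topology. *)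

theory Defs
  imports "HOL-Analysis.Analysis"
begin

text \<open>Cadlag functions on [0,\<infinity>) (values at negative times are irrelevant).\<close>
definition cadlag :: "(real \<Rightarrow> 'a::metric_space) \<Rightarrow> bool" where
  "cadlag f \<longleftrightarrow> (\<forall>s\<ge>0. continuous (at_right s) f) \<and>
                 (\<forall>s>0. \<exists>l. (f \<longlongrightarrow> l) (at_left s))"

definition time_changes :: "(real \<Rightarrow> real) set" where
  "time_changes = {lam. continuous_on {0..} lam \<and> strict_mono_on {0..} lam \<and> lam ` {0..} = {0..}}"

text \<open>Convergence in the Skorokhod J1 topology on D([0,\<infinity>)), via the standard sequential
  characterisation (Ethier--Kurtz, Prop. 3.5.3).\<close>
definition skorokhod_tendsto :: "(nat \<Rightarrow> real \<Rightarrow> 'a::metric_space) \<Rightarrow> (real \<Rightarrow> 'a) \<Rightarrow> bool" where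
  "skorokhod_tendsto xs x \<longleftrightarrow> (\<forall>n. cadlag (xs n)) \<and> cadlag x \<and>
     (\<exists>lam. (\<forall>n. lam n \<in> time_changes) \<and>
        (\<forall>T>0. \<forall>e>0. eventually (\<lambda>n. \<forall>s\<in>{0..T}. \<bar>lam n s - s\<bar> \<le> e) sequentially) \<and>
        (\<forall>T>0. \<forall>e>0. eventually (\<lambda>n. \<forall>s\<in>{0..T}. dist (xs n (lam n s)) (x s) \<le> e) sequentially))"

definition skorokhod_convergent :: "(nat \<Rightarrow> real \<Rightarrow> 'a::metric_space) \<Rightarrow> bool" where
  "skorokhod_convergent xs \<longleftrightarrow> (\<exists>x. skorokhod_tendsto xs x)"

text \<open>Partition sequence: t n i = t^n_i, k n = k_n.\<close>
definition partition_seq :: "(nat \<Rightarrow> nat \<Rightarrow> real) \<Rightarrow> (nat \<Rightarrow> nat) \<Rightarrow> bool" where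
  "partition_seq t k \<longleftrightarrow>
     (\<forall>n. t n 0 = 0) \<and> (\<forall>n i. i < k n \<longrightarrow> t n i < t n (Suc i)) \<and>
     mono (\<lambda>n. t n (k n)) \<and> filterlim (\<lambda>n. t n (k n)) at_top sequentially \<and>
     (\<forall>T. (\<lambda>n. Max ({t n (Suc i) - t n i | i. i < k n \<and> t n i \<le> T} \<union> {0})) \<longlonglongrightarrow> 0)"

definition qv_matrix :: "(nat \<Rightarrow> nat \<Rightarrow> real) \<Rightarrow> (nat \<Rightarrow> nat) \<Rightarrow> (real \<Rightarrow> real^'m)
     \<Rightarrow> nat \<Rightarrow> real \<Rightarrow> real^'m^'m" where
  "qv_matrix t k x n s = (\<Sum>i\<in>{i. i < k n \<and> t n i \<le> s}.
      (\<chi> a b. (x (t n (Suc i)) - x (t n i)) $ a * (x (t n (Suc i)) - x (t n i)) $ b))"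

end

theory Submission
  imports Defs
begin


lemma tc_props:
  assumes "lam \<in> time_changes"
  shows "continuous_on {0..} lam" "strict_mono_on {0..} lam" "lam ` {0..} = {0..}"
  using assms by (auto simp: time_changes_def)

lemma tc_less: "lam \<in> time_changes \<Longrightarrow> 0 \<le> s \<Longrightarrow> s < s' \<Longrightarrow> lam s < lam s'"
  unfolding time_changes_def strict_mono_on_def by auto

lemma tc_le: "lam \<in> time_changes \<Longrightarrow> 0 \<le> s \<Longrightarrow> s \<le> s' \<Longrightarrow> lam s \<le> lam s'"
  using tc_less[of lam s s'] by (cases "s = s'") auto

lemma tc_nonneg: "lam \<in> time_changes \<Longrightarrow> 0 \<le> s \<Longrightarrow> 0 \<le> lam s"
  unfolding time_changes_def by auto

lemma tc_surj: assumes "lam \<in> time_changes" "0 \<le> y" obtains w where "0 \<le> w" "lam w = y"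
proof -
  have "y \<in> lam ` {0..}" using assms unfolding time_changes_def by auto
  thus ?thesis using that by auto
qed

lemma tc_zero: assumes "lam \<in> time_changes" shows "lam 0 = 0"
proof -
  obtain w where w: "0 \<le> w" "lam w = 0" using tc_surj[OF assms, of 0] by auto
  show ?thesis
  proof (cases "w = 0")
    case False
    hence "lam 0 < lam w" using tc_less[OF assms, of 0 w] w by auto
    thus ?thesis using tc_nonneg[OF assms, of 0] w by auto
  qed (use w in auto)
qed

lemma tc_pos: "lam \<in> time_changes \<Longrightarrow> 0 < s \<Longrightarrow> 0 < lam s"
  using tc_less[of lam 0 s] tc_zero[of lam] by auto

lemma tc_id: "(\<lambda>s. s) \<in> time_changes"
  unfolding time_changes_def by (auto simp: strict_mono_on_def)

lemma tc_comp:
  assumes "f \<in> time_changes" "g \<in> time_changes"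
  shows "(\<lambda>s. f (g s)) \<in> time_changes"
proof -
  have "continuous_on {0..} (f \<circ> g)"
    apply (rule continuous_on_compose)
    using assms unfolding time_changes_def by auto
  moreover have "strict_mono_on {0..} (\<lambda>s. f (g s))"
  proof (rule strict_mono_onI)
    fix r s :: real assume "r \<in> {0..}" "s \<in> {0..}" "r < s"
    hence "g r < g s" "0 \<le> g r" using assms(2) tc_less tc_nonneg by auto
    thus "f (g r) < f (g s)" using assms(1) tc_less by blast
  qed
  moreover have "(\<lambda>s. f (g s)) ` {0..} = {0..}"
  proof -
    have "(\<lambda>s. f (g s)) ` {0..} = f ` (g ` {0..})" by (simp add: image_image)
    thus ?thesis using assms unfolding time_changes_def by simp
  qed
  ultimately show ?thesis unfolding time_changes_def by (auto simp: o_def)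
qed

lemma tc_continuous_at:
  assumes "lam \<in> time_changes" "0 < v" shows "isCont lam v"
proof -
  have "continuous_on {0<..} lam" using assms(1) unfolding time_changes_def
    by (auto intro: continuous_on_subset)
  thus ?thesis using assms(2) by (simp add: continuous_on_eq_continuous_at)
qed

definition hat :: "real \<Rightarrow> real \<Rightarrow> real \<Rightarrow> real \<Rightarrow> real" where
  "hat v w c s = s + c * max 0 (1 - \<bar>s - v\<bar> / w)"

lemma hat_far: "w > 0 \<Longrightarrow> \<bar>s - v\<bar> \<ge> w \<Longrightarrow> hat v w c s = s"
  unfolding hat_def by (auto simp: field_simps)

lemma hat_center: "hat v w c v = v + c"
  unfolding hat_def by simp

lemma hat_bound: assumes "w > 0" shows "\<bar>hat v w c s - s\<bar> \<le> \<bar>c\<bar>"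
proof -
  have a: "0 \<le> max 0 (1 - \<bar>s - v\<bar> / w)" by simp
  have b: "max 0 (1 - \<bar>s - v\<bar> / w) \<le> 1" using assms by simp
  have "\<bar>hat v w c s - s\<bar> = \<bar>c\<bar> * max 0 (1 - \<bar>s - v\<bar> / w)"
    unfolding hat_def using a by (simp add: abs_mult)
  also have "\<dots> \<le> \<bar>c\<bar>" using a b by (simp add: mult_left_le)
  finally show ?thesis .
qed

lemma hat_tc:
  assumes "w > 0" "w \<le> v" "\<bar>c\<bar> < w"
  shows "hat v w c \<in> time_changes"
proof -
  have lip: "\<bar>max 0 (1 - \<bar>s' - v\<bar> / w) - max 0 (1 - \<bar>s - v\<bar> / w)\<bar> \<le> \<bar>s' - s\<bar> / w" for s s'
  proof -
    have e: "(1 - \<bar>s' - v\<bar> / w) - (1 - \<bar>s - v\<bar> / w) = (\<bar>s - v\<bar> - \<bar>s' - v\<bar>) / w"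
      by (simp add: diff_divide_distrib)
    have "\<bar>(1 - \<bar>s' - v\<bar> / w) - (1 - \<bar>s - v\<bar> / w)\<bar> = \<bar>\<bar>s - v\<bar> - \<bar>s' - v\<bar>\<bar> / w"
      unfolding e using assms by simp
    also have "\<dots> \<le> \<bar>s' - s\<bar> / w" using assms by (intro divide_right_mono) auto
    finally show ?thesis by (auto simp: max_def)
  qed
  have mono: "hat v w c s < hat v w c s'" if "s < s'" for s s'
  proof -
    have "\<bar>c * (max 0 (1 - \<bar>s' - v\<bar> / w) - max 0 (1 - \<bar>s - v\<bar> / w))\<bar> \<le> \<bar>c\<bar> * (\<bar>s' - s\<bar> / w)"
      unfolding abs_mult by (intro mult_left_mono lip) auto
    also have "\<dots> < w * (\<bar>s' - s\<bar> / w)"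
      using assms that by (intro mult_strict_right_mono) auto
    also have "\<dots> = s' - s" using assms that by auto
    finally have d: "\<bar>c * (max 0 (1 - \<bar>s' - v\<bar> / w) - max 0 (1 - \<bar>s - v\<bar> / w))\<bar> < s' - s" .
    have "hat v w c s' - hat v w c s = (s' - s) + c * (max 0 (1 - \<bar>s' - v\<bar> / w) - max 0 (1 - \<bar>s - v\<bar> / w))"
      unfolding hat_def by (simp add: algebra_simps)
    thus ?thesis using d abs_ge_minus_self[of "c * (max 0 (1 - \<bar>s' - v\<bar> / w) - max 0 (1 - \<bar>s - v\<bar> / w))"]
      by linarith
  qed
  have cont: "continuous_on UNIV (hat v w c)"
    using assms unfolding hat_def by (intro continuous_intros) auto
  have h0: "hat v w c 0 = 0" using assms by (intro hat_far) auto
  have img: "hat v w c ` {0..} = {0..}"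
  proof
    show "hat v w c ` {0..} \<subseteq> {0..}"
    proof
      fix y assume "y \<in> hat v w c ` {0..}"
      then obtain s where s: "s \<ge> 0" "y = hat v w c s" by auto
      show "y \<in> {0..}"
      proof (cases "s = 0")
        case True thus ?thesis using s h0 by simp
      next
        case False thus ?thesis using s h0 mono[of 0 s] by simp
      qed
    qed
    show "{0..} \<subseteq> hat v w c ` {0..}"
    proof
      fix y :: real assume "y \<in> {0..}"
      hence y: "0 \<le> y" by auto
      let ?b = "max y (v + w)"
      have hb: "hat v w c ?b = ?b" using assms by (intro hat_far) auto
      have "\<exists>s\<ge>0. s \<le> ?b \<and> hat v w c s = y"
        apply (rule IVT)
        using h0 hb y cont by (auto intro: continuous_on_subset simp: continuous_on_eq_continuous_at)
      thus "y \<in> hat v w c ` {0..}" by auto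
    qed
  qed
  have "strict_mono_on {0..} (hat v w c)"
    unfolding strict_mono_on_def using mono by blast
  moreover have "continuous_on {0..} (hat v w c)"
    using cont by (rule continuous_on_subset) simp
  ultimately show ?thesis unfolding time_changes_def using img by blast
qed

lemma multi_hat:
  assumes "finite V" "w > 0" "\<forall>v\<in>V. w < v"
    "\<forall>v\<in>V. \<forall>v'\<in>V. v \<noteq> v' \<longrightarrow> 2 * w \<le> \<bar>v - v'\<bar>"
    "\<forall>v\<in>V. \<bar>p v - v\<bar> < w"
  shows "\<exists>lam\<in>time_changes. (\<forall>v\<in>V. lam v = p v) \<and>
            (\<forall>s. \<bar>lam s - s\<bar> \<le> (\<Sum>v\<in>V. \<bar>p v - v\<bar>)) \<and>
            (\<forall>s. (\<forall>v\<in>V. w \<le> \<bar>s - v\<bar>) \<longrightarrow> lam s = s)"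
  using assms
proof (induction V rule: finite_induct)
  case empty
  then show ?case using tc_id by auto
next
  case (insert v V)
  then obtain lam where lam: "lam \<in> time_changes" "\<forall>v\<in>V. lam v = p v"
    "\<forall>s. \<bar>lam s - s\<bar> \<le> (\<Sum>v\<in>V. \<bar>p v - v\<bar>)"
    "\<forall>s. (\<forall>v\<in>V. w \<le> \<bar>s - v\<bar>) \<longrightarrow> lam s = s" by auto
  let ?h = "hat v w (p v - v)"
  have htc: "?h \<in> time_changes" using insert by (intro hat_tc) auto
  have "(\<lambda>s. ?h (lam s)) \<in> time_changes" by (rule tc_comp[OF htc lam(1)])
  moreover have "?h (lam v) = p v"
  proof -
    have "\<forall>u\<in>V. w \<le> \<bar>v - u\<bar>"
    proof
      fix u assume u: "u \<in> V"
      hence "u \<noteq> v" using insert.hyps by auto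
      hence "2 * w \<le> \<bar>v - u\<bar>" using insert.prems(3) u by simp
      thus "w \<le> \<bar>v - u\<bar>" using insert.prems(1) by simp
    qed
    hence "lam v = v" using lam(4) by simp
    thus ?thesis by (simp add: hat_center)
  qed
  moreover have "?h (lam u) = p u" if "u \<in> V" for u
  proof -
    have "u \<noteq> v" using that insert.hyps by auto
    hence "2 * w \<le> \<bar>u - v\<bar>" using insert.prems that by auto
    moreover have "\<bar>p u - u\<bar> < w" using insert.prems that by auto
    ultimately have "w \<le> \<bar>p u - v\<bar>" by linarith
    thus ?thesis using lam(2) that hat_far insert.prems by auto
  qed
  moreover have "\<bar>?h (lam s) - s\<bar> \<le> (\<Sum>v\<in>insert v V. \<bar>p v - v\<bar>)" for s
  proof -
    have "\<bar>?h (lam s) - s\<bar> \<le> \<bar>?h (lam s) - lam s\<bar> + \<bar>lam s - s\<bar>" by linarith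
    also have "\<dots> \<le> \<bar>p v - v\<bar> + (\<Sum>v\<in>V. \<bar>p v - v\<bar>)"
      using hat_bound[of w v "p v - v" "lam s"] lam(3) insert.prems by (intro add_mono) auto
    finally show ?thesis using insert.hyps by simp
  qed
  moreover have "?h (lam s) = s" if "\<forall>u\<in>insert v V. w \<le> \<bar>s - u\<bar>" for s
    using that lam(4) hat_far insert.prems by auto
  ultimately show ?case by (intro bexI[of _ "\<lambda>s. ?h (lam s)"]) auto
qed



lemma sk_local:
  fixes xs :: "nat \<Rightarrow> real \<Rightarrow> 'a::metric_space"
  assumes cx: "\<forall>n. cadlag (xs n)" "cadlag x"
  and loc: "\<And>T e. T > 0 \<Longrightarrow> e > 0 \<Longrightarrow> eventually (\<lambda>n. \<exists>lam\<in>time_changes.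
      (\<forall>s\<in>{0..T}. \<bar>lam s - s\<bar> \<le> e) \<and> (\<forall>s\<in>{0..T}. dist (xs n (lam s)) (x s) \<le> e)) sequentially"
  shows "skorokhod_tendsto xs x"
proof -
  define good where "good n j lam \<longleftrightarrow> lam \<in> time_changes \<and>
     (\<forall>s\<in>{0..real j + 1}. \<bar>lam s - s\<bar> \<le> 1 / (real j + 1)) \<and>
     (\<forall>s\<in>{0..real j + 1}. dist (xs n (lam s)) (x s) \<le> 1 / (real j + 1))" for n j lam
  define G where "G n j \<longleftrightarrow> (\<exists>lam. good n j lam)" for n j
  have goodmono: "good n i lam" if "good n j lam" "i \<le> j" for n i j lam
  proof -
    have a: "real i + 1 \<le> real j + 1" using that(2) by simp
    have b: "1 / (real j + 1) \<le> 1 / (real i + 1)" using that(2) by (simp add: frac_le)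
    have g: "lam \<in> time_changes" "\<forall>s\<in>{0..real j + 1}. \<bar>lam s - s\<bar> \<le> 1 / (real j + 1)"
       "\<forall>s\<in>{0..real j + 1}. dist (xs n (lam s)) (x s) \<le> 1 / (real j + 1)"
      using that(1) unfolding good_def by auto
    have "\<forall>s\<in>{0..real i + 1}. \<bar>lam s - s\<bar> \<le> 1 / (real i + 1)"
    proof
      fix s assume "s \<in> {0..real i + 1}"
      hence "s \<in> {0..real j + 1}" using a by auto
      thus "\<bar>lam s - s\<bar> \<le> 1 / (real i + 1)" using g(2) b by force
    qed
    moreover have "\<forall>s\<in>{0..real i + 1}. dist (xs n (lam s)) (x s) \<le> 1 / (real i + 1)"
    proof
      fix s assume "s \<in> {0..real i + 1}"
      hence "s \<in> {0..real j + 1}" using a by auto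
      thus "dist (xs n (lam s)) (x s) \<le> 1 / (real i + 1)" using g(3) b by force
    qed
    ultimately show ?thesis using g(1) unfolding good_def by blast
  qed
  have evG: "eventually (\<lambda>n. G n j) sequentially" for j
  proof -
    have "eventually (\<lambda>n. \<exists>lam\<in>time_changes.
      (\<forall>s\<in>{0..real j + 1}. \<bar>lam s - s\<bar> \<le> 1 / (real j + 1)) \<and>
      (\<forall>s\<in>{0..real j + 1}. dist (xs n (lam s)) (x s) \<le> 1 / (real j + 1))) sequentially"
      by (rule loc) auto
    thus ?thesis
    proof (rule eventually_mono)
      fix n assume "\<exists>lam\<in>time_changes.
      (\<forall>s\<in>{0..real j + 1}. \<bar>lam s - s\<bar> \<le> 1 / (real j + 1)) \<and>
      (\<forall>s\<in>{0..real j + 1}. dist (xs n (lam s)) (x s) \<le> 1 / (real j + 1))"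
      then obtain l where "l \<in> time_changes" "(\<forall>s\<in>{0..real j + 1}. \<bar>l s - s\<bar> \<le> 1 / (real j + 1))"
         "(\<forall>s\<in>{0..real j + 1}. dist (xs n (l s)) (x s) \<le> 1 / (real j + 1))" by blast
      hence "good n j l" unfolding good_def by blast
      thus "G n j" unfolding G_def by blast
    qed
  qed
  define J where "J n = (GREATEST j. j \<le> n \<and> G n j)" for n
  define lam where "lam n = (if G n (J n) then (SOME l. good n (J n) l) else (\<lambda>s. s))" for n
  have lamtc: "lam n \<in> time_changes" for n
  proof (cases "G n (J n)")
    case True
    hence "good n (J n) (SOME l. good n (J n) l)" unfolding G_def by (rule someI_ex)
    thus ?thesis using True unfolding lam_def good_def by simp
  qed (simp add: lam_def tc_id)
  have evgood: "eventually (\<lambda>n. good n j (lam n)) sequentially" for j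
  proof -
    have "eventually (\<lambda>n. n \<ge> j \<and> G n j) sequentially"
      using eventually_conj[OF eventually_ge_at_top[of j] evG[of j]] .
    thus ?thesis
    proof (rule eventually_mono)
      fix n assume n: "n \<ge> j \<and> G n j"
      have P: "J n \<le> n \<and> G n (J n)" unfolding J_def
        by (rule GreatestI_nat[where k=j and b=n]) (use n in simp_all)
      have Q: "j \<le> J n" unfolding J_def
        by (rule Greatest_le_nat[where k=j and b=n]) (use n in simp_all)
      obtain l0 where "good n (J n) l0" using P unfolding G_def by blast
      hence "good n (J n) (SOME l. good n (J n) l)" by (metis someI_ex)
      hence "good n (J n) (lam n)" using P unfolding lam_def by simp
      thus "good n j (lam n)" using goodmono Q by blast
    qed
  qed
  have conv: "(\<forall>T>0. \<forall>e>0. eventually (\<lambda>n. \<forall>s\<in>{0..T}. \<bar>lam n s - s\<bar> \<le> e) sequentially) \<and>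
        (\<forall>T>0. \<forall>e>0. eventually (\<lambda>n. \<forall>s\<in>{0..T}. dist (xs n (lam n s)) (x s) \<le> e) sequentially)"
  proof (intro conjI allI impI)
    fix T e :: real assume Te: "T > 0" "e > 0"
    obtain j :: nat where j: "max T (1 / e) \<le> real j" using real_arch_simple by blast
    have T: "T \<le> real j + 1" using j by simp
    have "1 / e \<le> real j + 1" using j by simp
    hence E: "1 / (real j + 1) \<le> e" using Te by (simp add: divide_le_eq mult.commute)
    show "eventually (\<lambda>n. \<forall>s\<in>{0..T}. \<bar>lam n s - s\<bar> \<le> e) sequentially"
    proof (rule eventually_mono[OF evgood[of j]])
      fix n assume g: "good n j (lam n)"
      show "\<forall>s\<in>{0..T}. \<bar>lam n s - s\<bar> \<le> e"
      proof
        fix s assume "s \<in> {0..T}"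
        hence "s \<in> {0..real j + 1}" using T by auto
        hence "\<bar>lam n s - s\<bar> \<le> 1 / (real j + 1)" using g unfolding good_def by blast
        thus "\<bar>lam n s - s\<bar> \<le> e" using E by linarith
      qed
    qed
    show "eventually (\<lambda>n. \<forall>s\<in>{0..T}. dist (xs n (lam n s)) (x s) \<le> e) sequentially"
    proof (rule eventually_mono[OF evgood[of j]])
      fix n assume g: "good n j (lam n)"
      show "\<forall>s\<in>{0..T}. dist (xs n (lam n s)) (x s) \<le> e"
      proof
        fix s assume "s \<in> {0..T}"
        hence "s \<in> {0..real j + 1}" using T by auto
        hence "dist (xs n (lam n s)) (x s) \<le> 1 / (real j + 1)" using g unfolding good_def by blast
        thus "dist (xs n (lam n s)) (x s) \<le> e" using E by linarith
      qed
    qed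
  qed
  have "\<exists>lam. (\<forall>n. lam n \<in> time_changes) \<and>
        (\<forall>T>0. \<forall>e>0. eventually (\<lambda>n. \<forall>s\<in>{0..T}. \<bar>lam n s - s\<bar> \<le> e) sequentially) \<and>
        (\<forall>T>0. \<forall>e>0. eventually (\<lambda>n. \<forall>s\<in>{0..T}. dist (xs n (lam n s)) (x s) \<le> e) sequentially)"
    using lamtc conv by (intro exI[of _ lam]) simp
  thus ?thesis unfolding skorokhod_tendsto_def using cx by simp
qed



lemma right_nbhd:
  fixes f :: "real \<Rightarrow> 'a::metric_space"
  assumes "(f \<longlongrightarrow> l) (at_right r)" "e > 0"
  shows "\<exists>\<eta>>0. \<forall>u. r < u \<and> u < r + \<eta> \<longrightarrow> dist (f u) l < e"
proof -
  have "eventually (\<lambda>u. dist (f u) l < e) (at_right r)"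
    using assms tendsto_iff by blast
  then obtain b where b: "b > r" "\<forall>y>r. y < b \<longrightarrow> dist (f y) l < e"
    unfolding eventually_at_right_field by blast
  show ?thesis using b by (intro exI[of _ "b - r"]) auto
qed

lemma left_nbhd:
  fixes f :: "real \<Rightarrow> 'a::metric_space"
  assumes "(f \<longlongrightarrow> l) (at_left r)" "e > 0"
  shows "\<exists>\<eta>>0. \<forall>u. r - \<eta> < u \<and> u < r \<longrightarrow> dist (f u) l < e"
proof -
  have "eventually (\<lambda>u. dist (f u) l < e) (at_left r)"
    using assms tendsto_iff by blast
  then obtain b where b: "b < r" "\<forall>y>b. y < r \<longrightarrow> dist (f y) l < e"
    unfolding eventually_at_left_field by blast
  show ?thesis using b by (intro exI[of _ "r - b"]) auto
qed

lemma cadlag_right: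
  fixes f :: "real \<Rightarrow> 'a::metric_space"
  assumes "cadlag f" "r \<ge> 0" "e > 0"
  shows "\<exists>\<eta>>0. \<forall>u. r \<le> u \<and> u < r + \<eta> \<longrightarrow> dist (f u) (f r) < e"
proof -
  have "(f \<longlongrightarrow> f r) (at_right r)"
    using assms(1,2) unfolding cadlag_def by (simp add: continuous_within)
  from right_nbhd[OF this assms(3)] obtain \<eta> where "\<eta> > 0" "\<forall>u. r < u \<and> u < r + \<eta> \<longrightarrow> dist (f u) (f r) < e"
    by blast
  thus ?thesis using assms(3) by (intro exI[of _ \<eta>]) (auto simp: le_less)
qed

lemma cadlag_left:
  fixes f :: "real \<Rightarrow> 'a::metric_space"
  assumes "cadlag f" "r > 0"
  shows "(f \<longlongrightarrow> (SOME l. (f \<longlongrightarrow> l) (at_left r))) (at_left r)"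
proof -
  have "\<exists>l. (f \<longlongrightarrow> l) (at_left r)" using assms unfolding cadlag_def by blast
  thus ?thesis by (rule someI_ex)
qed

lemma cadlag_modulus:
  fixes f :: "real \<Rightarrow> real"
  assumes cf: "cadlag f" and ep: "\<epsilon> > 0" and T: "T \<ge> 0"
  obtains V \<delta> where "finite V" "\<delta> > 0"
    "\<forall>v\<in>V. 0 < v \<and> v \<le> T \<and> (\<exists>l. (f \<longlongrightarrow> l) (at_left v) \<and> \<epsilon> < \<bar>f v - l\<bar>)"
    "\<forall>s s'. s \<in> {0..T} \<longrightarrow> s' \<in> {0..T} \<longrightarrow> s \<le> s' \<longrightarrow> s' - s < \<delta> \<longrightarrow>
        (\<forall>v\<in>V. \<not> (s < v \<and> v \<le> s')) \<longrightarrow> \<bar>f s' - f s\<bar> \<le> 2 * \<epsilon>"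
proof -
  define Lf where "Lf r = (SOME l. (f \<longlongrightarrow> l) (at_left r))" for r
  have Lf: "(f \<longlongrightarrow> Lf r) (at_left r)" if "r > 0" for r
    unfolding Lf_def using cadlag_left[OF cf that] .
  have "\<exists>\<eta>>0. (\<forall>u. r \<le> u \<and> u < r + \<eta> \<longrightarrow> \<bar>f u - f r\<bar> < \<epsilon>/2) \<and>
             (r > 0 \<longrightarrow> (\<forall>u. r - \<eta> < u \<and> u < r \<longrightarrow> \<bar>f u - Lf r\<bar> < \<epsilon>/2))" if r: "r \<in> {0..T}" for r
  proof -
    obtain \<eta>1 where e1: "\<eta>1 > 0" "\<forall>u. r \<le> u \<and> u < r + \<eta>1 \<longrightarrow> dist (f u) (f r) < \<epsilon>/2"
      using cadlag_right[OF cf _, of r "\<epsilon>/2"] r ep by auto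
    show ?thesis
    proof (cases "r > 0")
      case True
      obtain \<eta>2 where e2: "\<eta>2 > 0" "\<forall>u. r - \<eta>2 < u \<and> u < r \<longrightarrow> dist (f u) (Lf r) < \<epsilon>/2"
        using left_nbhd[OF Lf[OF True], of "\<epsilon>/2"] ep by auto
      show ?thesis using e1 e2 by (intro exI[of _ "min \<eta>1 \<eta>2"]) (auto simp: dist_real_def)
    next
      case False
      thus ?thesis using e1 by (intro exI[of _ \<eta>1]) (auto simp: dist_real_def)
    qed
  qed
  then obtain \<eta> where \<eta>: "\<And>r. r \<in> {0..T} \<Longrightarrow> \<eta> r > 0 \<and> (\<forall>u. r \<le> u \<and> u < r + \<eta> r \<longrightarrow> \<bar>f u - f r\<bar> < \<epsilon>/2) \<and>
             (r > 0 \<longrightarrow> (\<forall>u. r - \<eta> r < u \<and> u < r \<longrightarrow> \<bar>f u - Lf r\<bar> < \<epsilon>/2))"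
    by metis
  have cov: "{0..T} \<subseteq> (\<Union>r\<in>{0..T}. ball r (\<eta> r))"
  proof
    fix s :: real assume "s \<in> {0..T}"
    thus "s \<in> (\<Union>r\<in>{0..T}. ball r (\<eta> r))" using \<eta>[of s] by (intro UN_I[of s]) auto
  qed
  obtain C where C: "C \<subseteq> {0..T}" "finite C" "{0..T} \<subseteq> (\<Union>r\<in>C. ball r (\<eta> r))"
    using compactE_image[OF compact_Icc[of 0 T], of "{0..T}" "\<lambda>r. ball r (\<eta> r)"] cov by auto
  obtain \<delta> where \<delta>: "\<delta> > 0" "\<And>x. x \<in> {0..T} \<Longrightarrow> \<exists>G \<in> (\<lambda>r. ball r (\<eta> r)) ` C. ball x \<delta> \<subseteq> G"
    using Heine_Borel_lemma[OF compact_Icc[of 0 T], of "(\<lambda>r. ball r (\<eta> r)) ` C"] C(3) by auto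
  define V where "V = {r \<in> C. 0 < r \<and> \<epsilon> < \<bar>f r - Lf r\<bar>}"
  have "finite V" using C(2) unfolding V_def by auto
  moreover have "\<forall>v\<in>V. 0 < v \<and> v \<le> T \<and> (\<exists>l. (f \<longlongrightarrow> l) (at_left v) \<and> \<epsilon> < \<bar>f v - l\<bar>)"
    using C(1) Lf unfolding V_def by auto
  moreover have "\<bar>f s' - f s\<bar> \<le> 2 * \<epsilon>"
    if s: "s \<in> {0..T}" "s' \<in> {0..T}" "s \<le> s'" "s' - s < \<delta>" "\<forall>v\<in>V. \<not> (s < v \<and> v \<le> s')" for s s'
  proof -
    obtain r where r: "r \<in> C" "ball s \<delta> \<subseteq> ball r (\<eta> r)" using \<delta>(2)[OF s(1)] by auto
    have rT: "r \<in> {0..T}" using r C(1) by auto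
    note er = \<eta>[OF rT]
    have "s \<in> ball s \<delta>" "s' \<in> ball s \<delta>" using s \<delta>(1) by (auto simp: dist_real_def)
    hence ss: "s \<in> ball r (\<eta> r)" "s' \<in> ball r (\<eta> r)" using r(2) by (meson subsetD)+
    hence ss': "r - \<eta> r < s" "s < r + \<eta> r" "r - \<eta> r < s'" "s' < r + \<eta> r"
      by (auto simp: dist_real_def)
    consider "r \<le> s" | "s' < r" | "s < r" "r \<le> s'" by linarith
    thus ?thesis
    proof cases
      case 1
      hence "\<bar>f s - f r\<bar> < \<epsilon>/2" "\<bar>f s' - f r\<bar> < \<epsilon>/2" using er ss' s(3) by auto
      thus ?thesis by linarith
    next
      case 2
      hence "r > 0" using s(1,3) by auto
      hence "\<bar>f s - Lf r\<bar> < \<epsilon>/2" "\<bar>f s' - Lf r\<bar> < \<epsilon>/2" using er ss' 2 s(3) by auto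
      thus ?thesis by linarith
    next
      case 3
      hence rp: "r > 0" using s(1) by auto
      have "r \<notin> V" using s(5) 3 by auto
      hence "\<bar>f r - Lf r\<bar> \<le> \<epsilon>" using r(1) rp unfolding V_def by auto
      moreover have "\<bar>f s - Lf r\<bar> < \<epsilon>/2" using er rp ss' 3 by auto
      moreover have "\<bar>f s' - f r\<bar> < \<epsilon>/2" using er ss' 3 by auto
      ultimately show ?thesis by linarith
    qed
  qed
  ultimately show ?thesis using that \<delta>(1) by blast
qed



definition incr :: "(nat \<Rightarrow> nat \<Rightarrow> real) \<Rightarrow> (real \<Rightarrow> real^'m) \<Rightarrow> nat \<Rightarrow> nat \<Rightarrow> real^'m" where
  "incr t x n i = x (t n (Suc i)) - x (t n i)"

lemma qv_entry: "qv_matrix t k x n s $ a $ b = (\<Sum>i\<in>{i. i < k n \<and> t n i \<le> s}. incr t x n i $ a * incr t x n i $ b)"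
  unfolding qv_matrix_def incr_def by simp

lemma ps_props:
  assumes "partition_seq t k"
  shows "\<And>n. t n 0 = 0" "\<And>n i. i < k n \<Longrightarrow> t n i < t n (Suc i)"
    "\<And>T. (\<lambda>n. Max ({t n (Suc i) - t n i | i. i < k n \<and> t n i \<le> T} \<union> {0})) \<longlonglongrightarrow> 0"
  using assms unfolding partition_seq_def by auto

lemma t_strict:
  assumes "partition_seq t k" "i < j" "j \<le> k n"
  shows "t n i < t n j"
  using assms(2,3)
proof (induction j)
  case 0 thus ?case by simp
next
  case (Suc j)
  have step: "t n j < t n (Suc j)" using ps_props(2)[OF assms(1)] Suc.prems by auto
  show ?case
  proof (cases "i = j")
    case True thus ?thesis using step by simp
  next
    case False
    hence "t n i < t n j" using Suc by auto
    thus ?thesis using step by simp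
  qed
qed

lemma t_le:
  assumes "partition_seq t k" "i \<le> j" "j \<le> k n"
  shows "t n i \<le> t n j"
  using t_strict[OF assms(1), of i j n] assms by (cases "i = j") auto

lemma t_inj:
  assumes "partition_seq t k" "i \<le> k n" "j \<le> k n" "t n i = t n j"
  shows "i = j"
  using t_strict[OF assms(1), of i j n] t_strict[OF assms(1), of j i n] assms
  by (cases i j rule: linorder_cases) auto

lemma t_nonneg:
  assumes "partition_seq t k" "i \<le> k n"
  shows "0 \<le> t n i"
  using t_le[OF assms(1), of 0 i n] ps_props(1)[OF assms(1)] assms(2) by simp

lemma straddle_unique:
  assumes "partition_seq t k" "j < k n" "j' < k n"
    "t n j < v" "v \<le> t n (Suc j)" "t n j' < v" "v \<le> t n (Suc j')"
  shows "j = j'"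
proof (rule ccontr)
  assume "j \<noteq> j'"
  then consider "j < j'" | "j' < j" by linarith
  thus False
  proof cases
    case 1
    hence "t n (Suc j) \<le> t n j'" using assms by (intro t_le) auto
    thus False using assms by linarith
  next
    case 2
    hence "t n (Suc j') \<le> t n j" using assms by (intro t_le) auto
    thus False using assms by linarith
  qed
qed

lemma mesh_bound:
  assumes "j < k n" "t n j \<le> T"
  shows "t n (Suc j) - t n j \<le> Max ({t n (Suc i) - t n i | i. i < k n \<and> t n i \<le> T} \<union> {0})"
proof (rule Max_ge)
  show "finite ({t n (Suc i) - t n i | i. i < k n \<and> t n i \<le> T} \<union> {0})" by simp
  show "t n (Suc j) - t n j \<in> {t n (Suc i) - t n i | i. i < k n \<and> t n i \<le> T} \<union> {0}"
    using assms by blast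
qed

lemma B2:
  assumes ps: "partition_seq t k" and cx: "cadlag x" and v: "v > 0" and c: "c > 0"
  shows "\<exists>\<eta>>0. eventually (\<lambda>n. \<forall>j<k n. \<bar>t n j - v\<bar> < \<eta> \<longrightarrow> c \<le> norm (incr t x n j) \<longrightarrow>
            t n j < v \<and> v \<le> t n (Suc j)) sequentially"
proof -
  obtain \<eta>1 where e1: "\<eta>1 > 0" "\<forall>u. v \<le> u \<and> u < v + \<eta>1 \<longrightarrow> dist (x u) (x v) < c/2"
    using cadlag_right[OF cx, of v "c/2"] v c by auto
  obtain \<eta>2 where e2: "\<eta>2 > 0" "\<forall>u. v - \<eta>2 < u \<and> u < v \<longrightarrow> dist (x u) (SOME l. (x \<longlongrightarrow> l) (at_left v)) < c/2"
    using left_nbhd[OF cadlag_left[OF cx v], of "c/2"] c by auto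
  define \<eta> where "\<eta> = min (min \<eta>1 \<eta>2) 1 / 2"
  have \<eta>: "\<eta> > 0" "\<eta> \<le> 1/2" "2 * \<eta> \<le> \<eta>1" "2 * \<eta> \<le> \<eta>2" using e1 e2 unfolding \<eta>_def by auto
  have "eventually (\<lambda>n. dist (Max ({t n (Suc i) - t n i | i. i < k n \<and> t n i \<le> v + 1} \<union> {0})) 0 < \<eta>) sequentially"
    using tendstoD[OF ps_props(3)[OF ps, of "v+1"] \<eta>(1)] .
  hence ev: "eventually (\<lambda>n. Max ({t n (Suc i) - t n i | i. i < k n \<and> t n i \<le> v + 1} \<union> {0}) < \<eta>) sequentially"
    by (rule eventually_mono) (simp add: dist_real_def)
  show ?thesis
  proof (intro exI[of _ \<eta>] conjI \<eta>(1))
    show "eventually (\<lambda>n. \<forall>j<k n. \<bar>t n j - v\<bar> < \<eta> \<longrightarrow> c \<le> norm (incr t x n j) \<longrightarrow>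
            t n j < v \<and> v \<le> t n (Suc j)) sequentially"
    proof (rule eventually_mono[OF ev], intro allI impI)
      fix n j assume M: "Max ({t n (Suc i) - t n i | i. i < k n \<and> t n i \<le> v + 1} \<union> {0}) < \<eta>"
        and j: "j < k n" and tj: "\<bar>t n j - v\<bar> < \<eta>" and cj: "c \<le> norm (incr t x n j)"
      have "t n j \<le> v + 1" using tj \<eta> by linarith
      hence gap: "t n (Suc j) - t n j < \<eta>" using mesh_bound[where k=k and n=n and j=j and t=t and T="v+1"] j M by linarith
      have inc: "t n j < t n (Suc j)" using ps_props(2)[OF ps j] .
      show "t n j < v \<and> v \<le> t n (Suc j)"
      proof (rule ccontr)
        assume "\<not> (t n j < v \<and> v \<le> t n (Suc j))"
        then consider "v \<le> t n j" | "t n (Suc j) < v" by linarith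
        thus False
        proof cases
          case 1
          have "dist (x (t n (Suc j))) (x v) < c/2" using e1(2) 1 inc gap tj \<eta> by auto
          moreover have "dist (x (t n j)) (x v) < c/2" using e1(2) 1 tj \<eta> by auto
          ultimately have "dist (x (t n (Suc j))) (x (t n j)) < c" by (metis dist_commute dist_triangle_half_l)
          thus False using cj unfolding incr_def by (simp add: dist_norm)
        next
          case 2
          let ?L = "SOME l. (x \<longlongrightarrow> l) (at_left v)"
          have "dist (x (t n (Suc j))) ?L < c/2" using e2(2) 2 inc tj \<eta> by auto
          moreover have "dist (x (t n j)) ?L < c/2" using e2(2) 2 inc tj \<eta> by auto
          ultimately have "dist (x (t n (Suc j))) (x (t n j)) < c" by (metis dist_commute dist_triangle_half_l)
          thus False using cj unfolding incr_def by (simp add: dist_norm)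
        qed
      qed
    qed
  qed
qed



lemma B1:
  fixes F :: "real \<Rightarrow> real" and \<mu> :: "nat \<Rightarrow> real \<Rightarrow> real" and x :: "real \<Rightarrow> real^'m"
  assumes ps: "partition_seq t k"
  and mu: "\<forall>n. \<mu> n \<in> time_changes"
  and v: "v > 0" and Fl: "(F \<longlongrightarrow> l) (at_left v)" and jump: "\<epsilon> < \<bar>F v - l\<bar>" and ep: "\<epsilon> > 0"
  and unif: "eventually (\<lambda>n. \<forall>s\<in>{0..v}. \<bar>qv_matrix t k x n (\<mu> n s) $ a $ b - F s\<bar> \<le> \<epsilon>/8) sequentially"
  shows "eventually (\<lambda>n. \<exists>j<k n. t n j = \<mu> n v \<and> \<epsilon>/2 < \<bar>incr t x n j $ a * incr t x n j $ b\<bar>) sequentially"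
proof -
  obtain \<eta>' where e': "\<eta>' > 0" "\<forall>u. v - \<eta>' < u \<and> u < v \<longrightarrow> dist (F u) l < \<epsilon>/8"
    using left_nbhd[OF Fl, of "\<epsilon>/8"] ep by auto
  show ?thesis
  proof (rule eventually_mono[OF unif])
    fix n assume U: "\<forall>s\<in>{0..v}. \<bar>qv_matrix t k x n (\<mu> n s) $ a $ b - F s\<bar> \<le> \<epsilon>/8"
    define g where "g s = qv_matrix t k x n s $ a $ b" for s
    define P where "P i = incr t x n i $ a * incr t x n i $ b" for i
    have g: "g s = (\<Sum>i\<in>{i. i < k n \<and> t n i \<le> s}. P i)" for s
      unfolding g_def P_def by (rule qv_entry)
    define y where "y = \<mu> n v"
    have mutc: "\<mu> n \<in> time_changes" using mu by auto
    have ypos: "y > 0" unfolding y_def using tc_pos[OF mutc v] .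
    define Z where "Z = {t n i | i. i < k n \<and> t n i < y}"
    have finZ: "finite Z" unfolding Z_def by simp
    define z where "z = Max (insert (y - 1) Z)"
    have zy: "z < y" unfolding z_def using finZ by (auto simp: Z_def)
    have Zz: "t n i \<le> z" if "i < k n" "t n i < y" for i
      unfolding z_def using finZ that by (intro Max_ge) (auto simp: Z_def)
    have "(\<mu> n \<longlongrightarrow> y) (at_left v)"
      using tc_continuous_at[OF mutc v] unfolding isCont_def y_def
      by (rule tendsto_mono[rotated]) (simp add: at_le)
    from left_nbhd[OF this, of "y - z"] zy obtain \<eta>'' where
      e'': "\<eta>'' > 0" "\<forall>u. v - \<eta>'' < u \<and> u < v \<longrightarrow> dist (\<mu> n u) y < y - z" by auto
    define s where "s = v - min (min \<eta>' \<eta>'') v / 2"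
    have s: "0 < s" "s < v" "v - \<eta>' < s" "v - \<eta>'' < s"
      unfolding s_def using e'(1) e''(1) v by auto
    have mus: "\<mu> n s < y" unfolding y_def using tc_less[OF mutc, of s v] s by auto
    have mus2: "z < \<mu> n s" using e''(2) s(2,4) by (auto simp: dist_real_def)
    have sets: "{i. i < k n \<and> t n i \<le> y} - {i. i < k n \<and> t n i \<le> \<mu> n s} = {i. i < k n \<and> t n i = y}"
    proof (intro set_eqI iffI)
      fix i assume "i \<in> {i. i < k n \<and> t n i \<le> y} - {i. i < k n \<and> t n i \<le> \<mu> n s}"
      hence i: "i < k n" "t n i \<le> y" "\<mu> n s < t n i" by auto
      have "\<not> t n i < y" using Zz[OF i(1)] i(3) mus2 by fastforce
      thus "i \<in> {i. i < k n \<and> t n i = y}" using i by auto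
    next
      fix i assume "i \<in> {i. i < k n \<and> t n i = y}"
      thus "i \<in> {i. i < k n \<and> t n i \<le> y} - {i. i < k n \<and> t n i \<le> \<mu> n s}" using mus by auto
    qed
    have diff: "g y - g (\<mu> n s) = (\<Sum>i\<in>{i. i < k n \<and> t n i = y}. P i)"
      unfolding g sets[symmetric] using mus by (subst sum_diff) auto
    have b1: "\<bar>g y - F v\<bar> \<le> \<epsilon>/8" using U v unfolding g_def y_def by auto
    have b2: "\<bar>g (\<mu> n s) - F s\<bar> \<le> \<epsilon>/8" using U s unfolding g_def by auto
    have b3: "\<bar>F s - l\<bar> < \<epsilon>/8" using e'(2) s by (auto simp: dist_real_def)
    have big: "5 * \<epsilon> / 8 < \<bar>g y - g (\<mu> n s)\<bar>" using b1 b2 b3 jump by linarith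
    show "\<exists>j<k n. t n j = \<mu> n v \<and> \<epsilon>/2 < \<bar>incr t x n j $ a * incr t x n j $ b\<bar>"
    proof (cases "{i. i < k n \<and> t n i = y} = {}")
      case True
      hence "g y - g (\<mu> n s) = 0" using diff by (simp only: sum.empty)
      thus ?thesis using big ep by simp
    next
      case False
      then obtain j where j: "j < k n" "t n j = y" by auto
      have "{i. i < k n \<and> t n i = y} = {j}"
        using j t_inj[OF ps, of _ n j] by auto
      hence "g y - g (\<mu> n s) = P j" using diff by simp
      hence "\<epsilon>/2 < \<bar>P j\<bar>" using big ep by simp
      thus ?thesis using j unfolding P_def y_def by auto
    qed
  qed
qed

lemma align:
  fixes F :: "real \<Rightarrow> real" and \<mu> :: "nat \<Rightarrow> real \<Rightarrow> real" and x :: "real \<Rightarrow> real^'m"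
  assumes ps: "partition_seq t k" and cx: "cadlag x"
  and mu: "\<forall>n. \<mu> n \<in> time_changes"
  and muconv: "\<And>e. e > 0 \<Longrightarrow> eventually (\<lambda>n. \<forall>s\<in>{0..v}. \<bar>\<mu> n s - s\<bar> \<le> e) sequentially"
  and v: "v > 0" and Fl: "(F \<longlongrightarrow> l) (at_left v)" and jump: "\<epsilon> < \<bar>F v - l\<bar>" and ep: "\<epsilon> > 0"
  and unif: "eventually (\<lambda>n. \<forall>s\<in>{0..v}. \<bar>qv_matrix t k x n (\<mu> n s) $ a $ b - F s\<bar> \<le> \<epsilon>/8) sequentially"
  shows "eventually (\<lambda>n. \<exists>j<k n. t n j = \<mu> n v \<and> t n j < v \<and> v \<le> t n (Suc j)) sequentially"
proof -
  define c where "c = sqrt (\<epsilon>/2)"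
  have c: "c > 0" "c * c = \<epsilon>/2" unfolding c_def using ep by auto
  obtain \<eta> where \<eta>: "\<eta> > 0" and evB2: "eventually (\<lambda>n. \<forall>j<k n. \<bar>t n j - v\<bar> < \<eta> \<longrightarrow> c \<le> norm (incr t x n j) \<longrightarrow>
            t n j < v \<and> v \<le> t n (Suc j)) sequentially"
    using B2[OF ps cx v c(1)] by blast
  have evmu: "eventually (\<lambda>n. \<bar>\<mu> n v - v\<bar> < \<eta>) sequentially"
  proof (rule eventually_mono[OF muconv[of "\<eta>/2"]])
    show "\<eta>/2 > 0" using \<eta> by simp
    fix n assume "\<forall>s\<in>{0..v}. \<bar>\<mu> n s - s\<bar> \<le> \<eta>/2"
    hence "\<bar>\<mu> n v - v\<bar> \<le> \<eta>/2" using v by auto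
    thus "\<bar>\<mu> n v - v\<bar> < \<eta>" using \<eta> by linarith
  qed
  note evB1 = B1[OF ps mu v Fl jump ep unif]
  show ?thesis
    using eventually_conj[OF evB2 eventually_conj[OF evmu evB1]]
  proof (rule eventually_mono)
    fix n assume H: "(\<forall>j<k n. \<bar>t n j - v\<bar> < \<eta> \<longrightarrow> c \<le> norm (incr t x n j) \<longrightarrow> t n j < v \<and> v \<le> t n (Suc j)) \<and>
      \<bar>\<mu> n v - v\<bar> < \<eta> \<and> (\<exists>j<k n. t n j = \<mu> n v \<and> \<epsilon>/2 < \<bar>incr t x n j $ a * incr t x n j $ b\<bar>)"
    then obtain j where j: "j < k n" "t n j = \<mu> n v" "\<epsilon>/2 < \<bar>incr t x n j $ a * incr t x n j $ b\<bar>" by blast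
    have "\<bar>incr t x n j $ a * incr t x n j $ b\<bar> \<le> norm (incr t x n j) * norm (incr t x n j)"
      unfolding abs_mult by (intro mult_mono component_le_norm_cart) auto
    hence "c \<le> norm (incr t x n j)"
      using j(3) c by (smt (verit) mult_mono norm_ge_zero)
    thus "\<exists>j<k n. t n j = \<mu> n v \<and> t n j < v \<and> v \<le> t n (Suc j)" using H j by auto
  qed
qed



lemma cadlag_entry:
  fixes f :: "real \<Rightarrow> real^'m^'n"
  assumes "cadlag f" shows "cadlag (\<lambda>s. f s $ a $ b)"
proof -
  have r: "continuous (at_right s) (\<lambda>s. f s $ a $ b)" if "s \<ge> 0" for s
  proof -
    have "(f \<longlongrightarrow> f s) (at_right s)" using assms that unfolding cadlag_def by (simp add: continuous_within)
    hence "((\<lambda>s. f s $ a $ b) \<longlongrightarrow> f s $ a $ b) (at_right s)" by (intro tendsto_vec_nth)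
    thus ?thesis by (simp add: continuous_within)
  qed
  have l: "\<exists>l. ((\<lambda>s. f s $ a $ b) \<longlongrightarrow> l) (at_left s)" if "s > 0" for s
  proof -
    obtain l where "(f \<longlongrightarrow> l) (at_left s)" using assms \<open>s > 0\<close> unfolding cadlag_def by blast
    hence "((\<lambda>s. f s $ a $ b) \<longlongrightarrow> l $ a $ b) (at_left s)" by (intro tendsto_vec_nth)
    thus ?thesis by blast
  qed
  show ?thesis unfolding cadlag_def using r l by blast
qed

lemma cadlag_from_entries:
  fixes f :: "real \<Rightarrow> real^'m^'n"
  assumes "\<And>a b. cadlag (\<lambda>s. f s $ a $ b)" shows "cadlag f"
proof -
  have r: "continuous (at_right s) f" if "s \<ge> 0" for s
  proof -
    have "((\<lambda>s. f s $ a $ b) \<longlongrightarrow> f s $ a $ b) (at_right s)" for a b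
      using assms[of a b] that unfolding cadlag_def by (simp add: continuous_within)
    hence "(f \<longlongrightarrow> f s) (at_right s)" by (intro vec_tendstoI)
    thus ?thesis by (simp add: continuous_within)
  qed
  have l: "\<exists>l. (f \<longlongrightarrow> l) (at_left s)" if "s > 0" for s
  proof -
    have "\<forall>a b. \<exists>l. ((\<lambda>s. f s $ a $ b) \<longlongrightarrow> l) (at_left s)" using assms that unfolding cadlag_def by blast
    then obtain L where L: "\<And>a b. ((\<lambda>s. f s $ a $ b) \<longlongrightarrow> L a b) (at_left s)" by metis
    have "(f \<longlongrightarrow> (\<chi> a b. L a b)) (at_left s)"
      by (intro vec_tendstoI) (simp add: L)
    thus ?thesis by blast
  qed
  show ?thesis unfolding cadlag_def using r l by blast
qed

lemma entry_le_dist: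
  fixes A B :: "real^'m^'n"
  shows "\<bar>A $ a $ b - B $ a $ b\<bar> \<le> dist A B"
proof -
  have "\<bar>(A - B) $ a $ b\<bar> \<le> norm ((A - B) $ a)" by (rule component_le_norm_cart)
  also have "\<dots> \<le> norm (A - B)" by (rule Finite_Cartesian_Product.norm_nth_le)
  finally show ?thesis by (simp add: dist_norm)
qed

lemma dist_le_entries:
  fixes A B :: "real^'m^'n"
  assumes "\<And>a b. \<bar>A $ a $ b - B $ a $ b\<bar> \<le> c"
  shows "dist A B \<le> real CARD('n) * real CARD('m) * c"
proof -
  have "dist A B = norm (A - B)" by (simp add: dist_norm)
  also have "\<dots> \<le> (\<Sum>a\<in>UNIV. norm ((A - B) $ a))" unfolding norm_vec_def[of "A - B"] by (rule L2_set_le_sum) simp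
  also have "\<dots> \<le> (\<Sum>a\<in>UNIV. (\<Sum>b\<in>UNIV. \<bar>(A - B) $ a $ b\<bar>))"
    by (intro sum_mono norm_le_l1_cart)
  also have "\<dots> \<le> (\<Sum>a\<in>(UNIV::'n set). (\<Sum>b\<in>(UNIV::'m set). c))"
    using assms by (intro sum_mono) simp
  also have "\<dots> = real CARD('n) * real CARD('m) * c" by simp
  finally show ?thesis .
qed

lemma forward:
  fixes xs :: "nat \<Rightarrow> real \<Rightarrow> real^'m^'n"
  assumes "skorokhod_tendsto xs X"
  shows "skorokhod_tendsto (\<lambda>n s. xs n s $ a $ b) (\<lambda>s. X s $ a $ b)"
proof -
  obtain lam where lam: "\<forall>n. lam n \<in> time_changes"
     "\<forall>T>0. \<forall>e>0. eventually (\<lambda>n. \<forall>s\<in>{0..T}. \<bar>lam n s - s\<bar> \<le> e) sequentially"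
     "\<forall>T>0. \<forall>e>0. eventually (\<lambda>n. \<forall>s\<in>{0..T}. dist (xs n (lam n s)) (X s) \<le> e) sequentially"
    and c: "\<forall>n. cadlag (xs n)" "cadlag X"
    using assms unfolding skorokhod_tendsto_def by blast
  have "\<forall>T>0. \<forall>e>0. eventually (\<lambda>n. \<forall>s\<in>{0..T}. dist (xs n (lam n s) $ a $ b) (X s $ a $ b) \<le> e) sequentially"
  proof (intro allI impI)
    fix T e :: real assume "T > 0" "e > 0"
    hence "eventually (\<lambda>n. \<forall>s\<in>{0..T}. dist (xs n (lam n s)) (X s) \<le> e) sequentially" using lam(3) by blast
    thus "eventually (\<lambda>n. \<forall>s\<in>{0..T}. dist (xs n (lam n s) $ a $ b) (X s $ a $ b) \<le> e) sequentially"
    proof (rule eventually_mono)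
      fix n assume H: "\<forall>s\<in>{0..T}. dist (xs n (lam n s)) (X s) \<le> e"
      show "\<forall>s\<in>{0..T}. dist (xs n (lam n s) $ a $ b) (X s $ a $ b) \<le> e"
      proof
        fix s assume "s \<in> {0..T}"
        hence "dist (xs n (lam n s)) (X s) \<le> e" using H by blast
        thus "dist (xs n (lam n s) $ a $ b) (X s $ a $ b) \<le> e"
          using entry_le_dist[of "xs n (lam n s)" a b "X s"] by (simp add: dist_real_def)
      qed
    qed
  qed
  moreover have "\<forall>n. cadlag (\<lambda>s. xs n s $ a $ b)" "cadlag (\<lambda>s. X s $ a $ b)"
    using c cadlag_entry by auto
  ultimately show ?thesis unfolding skorokhod_tendsto_def using lam(1,2) by blast
qed



lemma local_step:
  fixes x :: "real \<Rightarrow> real^'m" and F :: "'m \<Rightarrow> 'm \<Rightarrow> real \<Rightarrow> real"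
    and \<mu> :: "'m \<Rightarrow> 'm \<Rightarrow> nat \<Rightarrow> real \<Rightarrow> real"
  assumes ps: "partition_seq t k" and cx: "cadlag x"
  and mutc: "\<And>a b n. \<mu> a b n \<in> time_changes"
  and muconv: "\<And>a b T e. T > 0 \<Longrightarrow> e > 0 \<Longrightarrow> eventually (\<lambda>n. \<forall>s\<in>{0..T}. \<bar>\<mu> a b n s - s\<bar> \<le> e) sequentially"
  and qconv: "\<And>a b T e. T > 0 \<Longrightarrow> e > 0 \<Longrightarrow>
      eventually (\<lambda>n. \<forall>s\<in>{0..T}. \<bar>qv_matrix t k x n (\<mu> a b n s) $ a $ b - F a b s\<bar> \<le> e) sequentially"
  and cF: "\<And>a b. cadlag (F a b)"
  and T: "T > 0" and e: "e > 0"
  shows "eventually (\<lambda>n. \<exists>lam\<in>time_changes. (\<forall>s\<in>{0..T}. \<bar>lam s - s\<bar> \<le> e) \<and>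
      (\<forall>s\<in>{0..T}. dist (qv_matrix t k x n (lam s)) (\<chi> a b. F a b s) \<le> e)) sequentially"
proof -
  define q where "q = qv_matrix t k x"
  define M where "M = real CARD('m)"
  have M: "M > 0" unfolding M_def by simp
  define \<epsilon> where "\<epsilon> = e / (3 * M * M)"
  have ep: "\<epsilon> > 0" unfolding \<epsilon>_def using e M by simp
  have ep3: "M * M * (3 * \<epsilon>) = e" unfolding \<epsilon>_def using M by simp
  define T1 where "T1 = T + 1"
  have T1: "T1 > 0" unfolding T1_def using T by simp
  have "\<forall>a b. \<exists>V \<delta>. finite V \<and> \<delta> > 0 \<and>
    (\<forall>v\<in>V. 0 < v \<and> v \<le> T1 \<and> (\<exists>l. (F a b \<longlongrightarrow> l) (at_left v) \<and> \<epsilon> < \<bar>F a b v - l\<bar>)) \<and>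
    (\<forall>s s'. s \<in> {0..T1} \<longrightarrow> s' \<in> {0..T1} \<longrightarrow> s \<le> s' \<longrightarrow> s' - s < \<delta> \<longrightarrow>
        (\<forall>v\<in>V. \<not> (s < v \<and> v \<le> s')) \<longrightarrow> \<bar>F a b s' - F a b s\<bar> \<le> 2 * \<epsilon>)"
  proof (intro allI)
    fix a b
    obtain V \<delta> where "finite V" "\<delta> > 0"
      "\<forall>v\<in>V. 0 < v \<and> v \<le> T1 \<and> (\<exists>l. (F a b \<longlongrightarrow> l) (at_left v) \<and> \<epsilon> < \<bar>F a b v - l\<bar>)"
      "\<forall>s s'. s \<in> {0..T1} \<longrightarrow> s' \<in> {0..T1} \<longrightarrow> s \<le> s' \<longrightarrow> s' - s < \<delta> \<longrightarrow>
        (\<forall>v\<in>V. \<not> (s < v \<and> v \<le> s')) \<longrightarrow> \<bar>F a b s' - F a b s\<bar> \<le> 2 * \<epsilon>"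
      using cadlag_modulus[OF cF[of a b] ep less_imp_le[OF T1]] by blast
    thus "\<exists>V \<delta>. finite V \<and> \<delta> > 0 \<and>
    (\<forall>v\<in>V. 0 < v \<and> v \<le> T1 \<and> (\<exists>l. (F a b \<longlongrightarrow> l) (at_left v) \<and> \<epsilon> < \<bar>F a b v - l\<bar>)) \<and>
    (\<forall>s s'. s \<in> {0..T1} \<longrightarrow> s' \<in> {0..T1} \<longrightarrow> s \<le> s' \<longrightarrow> s' - s < \<delta> \<longrightarrow>
        (\<forall>v\<in>V. \<not> (s < v \<and> v \<le> s')) \<longrightarrow> \<bar>F a b s' - F a b s\<bar> \<le> 2 * \<epsilon>)" by blast
  qed
  then obtain V \<delta> where V: "\<And>a b. finite (V a b)" "\<And>a b. \<delta> a b > 0"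
    "\<And>a b. \<forall>v\<in>V a b. 0 < v \<and> v \<le> T1 \<and> (\<exists>l. (F a b \<longlongrightarrow> l) (at_left v) \<and> \<epsilon> < \<bar>F a b v - l\<bar>)"
    and md: "\<And>a b. \<forall>s s'. s \<in> {0..T1} \<longrightarrow> s' \<in> {0..T1} \<longrightarrow> s \<le> s' \<longrightarrow> s' - s < \<delta> a b \<longrightarrow>
        (\<forall>v\<in>V a b. \<not> (s < v \<and> v \<le> s')) \<longrightarrow> \<bar>F a b s' - F a b s\<bar> \<le> 2 * \<epsilon>"
    by metis
  define Vall where "Vall = (\<Union>a. \<Union>b. V a b)"
  have finV: "finite Vall" unfolding Vall_def using V(1) by simp
  have Vpos: "0 < v" "v \<le> T1" if "v \<in> Vall" for v using that V(3) unfolding Vall_def by blast+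
  define \<delta>0 where "\<delta>0 = Min ((\<lambda>p. \<delta> (fst p) (snd p)) ` UNIV)"
  have d0: "\<delta>0 > 0" unfolding \<delta>0_def using V(2) by (subst Min_gr_iff) auto
  have d0le: "\<delta>0 \<le> \<delta> a b" for a b unfolding \<delta>0_def by (rule Min_le) (auto intro: image_eqI[of _ _ "(a,b)"])
  define W where "W = insert 1 (Vall \<union> (\<lambda>p. \<bar>fst p - snd p\<bar>) ` {p. fst p \<in> Vall \<and> snd p \<in> Vall \<and> fst p \<noteq> snd p})"
  have finW: "finite W"
  proof -
    have "{p. fst p \<in> Vall \<and> snd p \<in> Vall \<and> fst p \<noteq> snd p} \<subseteq> Vall \<times> Vall" by auto
    hence "finite {p. fst p \<in> Vall \<and> snd p \<in> Vall \<and> fst p \<noteq> snd p}" using finV finite_subset by blast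
    thus ?thesis unfolding W_def using finV by simp
  qed
  have Wpos: "\<forall>z\<in>W. 0 < z" unfolding W_def using Vpos by auto
  define w where "w = Min W / 3"
  have w: "w > 0" unfolding w_def using finW Wpos by (simp add: W_def)
  have wle: "3 * w \<le> z" if "z \<in> W" for z unfolding w_def using finW that by simp
  have wv: "w < v" if "v \<in> Vall" for v using wle[of v] that w unfolding W_def by auto
  have wgap: "2 * w \<le> \<bar>v - v'\<bar>" if "v \<in> Vall" "v' \<in> Vall" "v \<noteq> v'" for v v'
  proof -
    have "\<bar>v - v'\<bar> \<in> W" unfolding W_def using that by (auto intro: image_eqI[of _ _ "(v, v')"])
    thus ?thesis using wle w by fastforce
  qed
  define \<sigma> where "\<sigma> = min e (min (\<delta>0/4) (1/4))"
  have sig: "\<sigma> > 0" "\<sigma> \<le> e" "\<sigma> \<le> \<delta>0/4" "\<sigma> \<le> 1/4" unfolding \<sigma>_def using e d0 by auto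
  define \<rho> where "\<rho> = min (min (w/2) (1/4)) (min (\<delta>0/4) (\<sigma> / (real (card Vall) + 1)))"
  have rho0: "\<rho> > 0" unfolding \<rho>_def using w d0 sig by simp
  have rho: "\<rho> > 0" "\<rho> \<le> w/2" "\<rho> \<le> 1/4" "\<rho> \<le> \<delta>0/4" "\<rho> \<le> \<sigma> / (real (card Vall) + 1)"
    using rho0 unfolding \<rho>_def by (simp_all only: min_le_iff_disj order_refl simp_thms)
  have cardrho: "real (card Vall) * \<rho> \<le> \<sigma>"
  proof -
    have "real (card Vall) * \<rho> \<le> real (card Vall) * (\<sigma> / (real (card Vall) + 1))"
      using rho(5) by (intro mult_left_mono) auto
    also have "\<dots> \<le> \<sigma>" using sig(1) by (simp add: field_simps)
    finally show ?thesis .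
  qed
  have "\<forall>v\<in>Vall. \<exists>ab. v \<in> V (fst ab) (snd ab)" unfolding Vall_def by auto
  then obtain AB where AB: "\<And>v. v \<in> Vall \<Longrightarrow> v \<in> V (fst (AB v)) (snd (AB v))" by metis
  have E1: "eventually (\<lambda>n. \<forall>a b. \<forall>s\<in>{0..T1}. \<bar>\<mu> a b n s - s\<bar> \<le> \<rho>) sequentially"
    by (intro eventually_all_finite muconv T1 rho(1))
  have E2: "eventually (\<lambda>n. \<forall>a b. \<forall>s\<in>{0..T1}. \<bar>q n (\<mu> a b n s) $ a $ b - F a b s\<bar> \<le> \<epsilon>/8) sequentially"
    unfolding q_def by (intro eventually_all_finite qconv T1) (use ep in simp)
  have E3: "eventually (\<lambda>n. \<forall>a b. \<forall>v\<in>V a b. \<exists>j<k n. t n j = \<mu> a b n v \<and> t n j < v \<and> v \<le> t n (Suc j)) sequentially"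
  proof (intro eventually_all_finite eventually_ball_finite V(1) ballI)
    fix a b v assume v: "v \<in> V a b"
    then obtain l where l: "0 < v" "(F a b \<longlongrightarrow> l) (at_left v)" "\<epsilon> < \<bar>F a b v - l\<bar>" using V(3) by blast
    show "eventually (\<lambda>n. \<exists>j<k n. t n j = \<mu> a b n v \<and> t n j < v \<and> v \<le> t n (Suc j)) sequentially"
    proof (rule align[OF ps cx _ _ l(1) l(2) l(3) ep])
      show "\<forall>n. \<mu> a b n \<in> time_changes" using mutc by blast
      show "\<And>e. e > 0 \<Longrightarrow> eventually (\<lambda>n. \<forall>s\<in>{0..v}. \<bar>\<mu> a b n s - s\<bar> \<le> e) sequentially"
        using muconv l(1) by blast
      show "eventually (\<lambda>n. \<forall>s\<in>{0..v}. \<bar>qv_matrix t k x n (\<mu> a b n s) $ a $ b - F a b s\<bar> \<le> \<epsilon>/8) sequentially"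
        by (rule qconv[OF l(1)]) (use ep in simp)
    qed
  qed
  show ?thesis
    using eventually_conj[OF E1 eventually_conj[OF E2 E3]]
  proof (rule eventually_mono, elim conjE)
    fix n
    assume e1: "\<forall>a b. \<forall>s\<in>{0..T1}. \<bar>\<mu> a b n s - s\<bar> \<le> \<rho>"
      and e2: "\<forall>a b. \<forall>s\<in>{0..T1}. \<bar>q n (\<mu> a b n s) $ a $ b - F a b s\<bar> \<le> \<epsilon>/8"
      and e3: "\<forall>a b. \<forall>v\<in>V a b. \<exists>j<k n. t n j = \<mu> a b n v \<and> t n j < v \<and> v \<le> t n (Suc j)"
    define p where "p v = \<mu> (fst (AB v)) (snd (AB v)) n v" for v
    have cons: "\<mu> a b n v = p v" if "v \<in> V a b" for a b v
    proof -
      have vV: "v \<in> Vall" unfolding Vall_def using that by blast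
      have "\<exists>j<k n. t n j = \<mu> a b n v \<and> t n j < v \<and> v \<le> t n (Suc j)"
        using e3 that by simp
      then obtain j where j: "j < k n" "t n j = \<mu> a b n v" "t n j < v" "v \<le> t n (Suc j)" by blast
      have "\<exists>j<k n. t n j = \<mu> (fst (AB v)) (snd (AB v)) n v \<and> t n j < v \<and> v \<le> t n (Suc j)"
        using e3 AB[OF vV] by simp
      then obtain j' where j': "j' < k n" "t n j' = p v" "t n j' < v" "v \<le> t n (Suc j')"
        unfolding p_def by blast
      have "j = j'" using straddle_unique[OF ps j(1) j'(1) j(3,4) j'(3,4)] .
      thus ?thesis using j j' by simp
    qed
    have pv: "\<bar>p v - v\<bar> \<le> \<rho>" if "v \<in> Vall" for v
    proof -
      have "v \<in> {0..T1}" using Vpos[OF that] by simp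
      thus ?thesis using e1 unfolding p_def by simp
    qed
    have c1: "\<forall>v\<in>Vall. w < v" using wv by blast
    have c2: "\<forall>v\<in>Vall. \<forall>v'\<in>Vall. v \<noteq> v' \<longrightarrow> 2 * w \<le> \<bar>v - v'\<bar>" using wgap by blast
    have c3: "\<forall>v\<in>Vall. \<bar>p v - v\<bar> < w"
    proof
      fix v assume "v \<in> Vall"
      hence "\<bar>p v - v\<bar> \<le> \<rho>" by (rule pv)
      thus "\<bar>p v - v\<bar> < w" using rho(2) w by linarith
    qed
    obtain lam where lam: "lam \<in> time_changes" "\<forall>v\<in>Vall. lam v = p v"
       "\<forall>s. \<bar>lam s - s\<bar> \<le> (\<Sum>v\<in>Vall. \<bar>p v - v\<bar>)"
      using multi_hat[OF finV w c1 c2 c3] by blast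
    have lamb: "\<bar>lam s - s\<bar> \<le> \<sigma>" for s
    proof -
      have "(\<Sum>v\<in>Vall. \<bar>p v - v\<bar>) \<le> (\<Sum>v\<in>Vall. \<rho>)" using pv by (intro sum_mono) auto
      also have "\<dots> = real (card Vall) * \<rho>" by simp
      finally show ?thesis using lam(3)[rule_format, of s] cardrho by linarith
    qed
    have entry: "\<bar>q n (lam s) $ a $ b - F a b s\<bar> \<le> 3 * \<epsilon>" if s: "s \<in> {0..T}" for s a b
    proof -
      define y where "y = lam s"
      have y0: "0 \<le> y" unfolding y_def using tc_nonneg[OF lam(1)] s by auto
      obtain w' where w': "0 \<le> w'" "\<mu> a b n w' = y" using tc_surj[OF mutc y0] by blast
      have ys: "\<bar>y - s\<bar> \<le> \<sigma>" unfolding y_def by (rule lamb)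
      have wT: "w' \<le> T1"
      proof (rule ccontr)
        assume "\<not> w' \<le> T1"
        hence f0: "\<mu> a b n T1 < y" using tc_less[OF mutc[of a b n], of T1 w'] T1 w'(2) by simp
        have "\<bar>\<mu> a b n T1 - T1\<bar> \<le> \<rho>" using e1 T1 by auto
        hence f1: "T1 - \<rho> \<le> \<mu> a b n T1" by (simp add: abs_le_iff)
        have f2: "y \<le> s + \<sigma>" using ys by (simp add: abs_le_iff)
        have f3: "s \<le> T" using s by simp
        show False using f0 f1 f2 f3 rho(3) sig(4) unfolding T1_def by linarith
      qed
      have mw: "\<bar>\<mu> a b n w' - w'\<bar> \<le> \<rho>" using e1 w' wT by auto
      have close: "\<bar>w' - s\<bar> < \<delta> a b"
      proof -
        have "\<bar>w' - s\<bar> \<le> \<rho> + \<sigma>" using mw ys w'(2) by (simp add: abs_le_iff) 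
        thus ?thesis using rho(4) sig(3) d0 d0le[of a b] by linarith
      qed
      have nojump: "\<forall>v\<in>V a b. \<not> (min s w' < v \<and> v \<le> max s w')"
      proof
        fix v assume v: "v \<in> V a b"
        have vV: "v \<in> Vall" unfolding Vall_def using v by blast
        have v0: "0 < v" using Vpos[OF vV] by simp
        have lv: "lam v = \<mu> a b n v" using lam(2) vV cons[OF v] by simp
        show "\<not> (min s w' < v \<and> v \<le> max s w')"
        proof (cases "s < v")
          case True
          hence "lam s < lam v" using tc_less[OF lam(1)] s by auto
          hence "\<mu> a b n w' < \<mu> a b n v" using w' lv unfolding y_def by simp
          hence "w' < v" using tc_le[OF mutc[of a b n], of v w'] v0 by force
          thus ?thesis using True by auto
        next
          case False
          hence "lam v \<le> lam s" using tc_le[OF lam(1), of v s] v0 by auto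
          hence "\<mu> a b n v \<le> \<mu> a b n w'" using w' lv unfolding y_def by simp
          hence "v \<le> w'" using tc_less[OF mutc[of a b n], of w' v] w' by force
          thus ?thesis using False by auto
        qed
      qed
      have Fd: "\<bar>F a b w' - F a b s\<bar> \<le> 2 * \<epsilon>"
      proof (cases "s \<le> w'")
        case True
        thus ?thesis using md[of a b, rule_format, of s w'] s w' wT close nojump unfolding T1_def by auto
      next
        case False
        hence "\<bar>F a b s - F a b w'\<bar> \<le> 2 * \<epsilon>"
          using md[of a b, rule_format, of w' s] s w' wT close nojump unfolding T1_def by auto
        thus ?thesis by linarith
      qed
      have "\<bar>q n (\<mu> a b n w') $ a $ b - F a b w'\<bar> \<le> \<epsilon>/8" using e2 w' wT by auto
      hence "\<bar>q n y $ a $ b - F a b w'\<bar> \<le> \<epsilon>/8" using w' by simp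
      thus ?thesis using Fd ep unfolding y_def by linarith
    qed
    show "\<exists>lam\<in>time_changes. (\<forall>s\<in>{0..T}. \<bar>lam s - s\<bar> \<le> e) \<and>
      (\<forall>s\<in>{0..T}. dist (qv_matrix t k x n (lam s)) (\<chi> a b. F a b s) \<le> e)"
    proof (intro bexI[OF _ lam(1)] conjI ballI)
      fix s assume "s \<in> {0..T}"
      show "\<bar>lam s - s\<bar> \<le> e" using lamb[of s] sig(2) by linarith
    next
      fix s assume s: "s \<in> {0..T}"
      have "dist (q n (lam s)) (\<chi> a b. F a b s) \<le> real CARD('m) * real CARD('m) * (3 * \<epsilon>)"
        by (rule dist_le_entries) (use entry[OF s] in simp)
      thus "dist (qv_matrix t k x n (lam s)) (\<chi> a b. F a b s) \<le> e"
        using ep3 unfolding q_def M_def by simp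
    qed
  qed
qed



theorem proposition3p5:
  fixes t :: "nat \<Rightarrow> nat \<Rightarrow> real" and k :: "nat \<Rightarrow> nat" and x :: "real \<Rightarrow> real^'m"
  assumes "partition_seq t k"
    and "cadlag x"
  shows "skorokhod_convergent (qv_matrix t k x) \<longleftrightarrow>
         (\<forall>a b. skorokhod_convergent (\<lambda>n s. qv_matrix t k x n s $ a $ b))"
proof
  assume "skorokhod_convergent (qv_matrix t k x)"
  then obtain X where "skorokhod_tendsto (qv_matrix t k x) X" unfolding skorokhod_convergent_def by blast
  thus "\<forall>a b. skorokhod_convergent (\<lambda>n s. qv_matrix t k x n s $ a $ b)"
    unfolding skorokhod_convergent_def using forward by blast
next
  assume H: "\<forall>a b. skorokhod_convergent (\<lambda>n s. qv_matrix t k x n s $ a $ b)"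
  define q where "q = qv_matrix t k x"
  have "\<forall>a b. \<exists>F. skorokhod_tendsto (\<lambda>n s. q n s $ a $ b) F"
    using H unfolding skorokhod_convergent_def q_def by blast
  then obtain F where F: "\<And>a b. skorokhod_tendsto (\<lambda>n s. q n s $ a $ b) (F a b)" by metis
  define P where "P a b lam \<longleftrightarrow> (\<forall>n. lam n \<in> time_changes) \<and>
        (\<forall>T>0. \<forall>e>0. eventually (\<lambda>n. \<forall>s\<in>{0..T}. \<bar>lam n s - s\<bar> \<le> e) sequentially) \<and>
        (\<forall>T>0. \<forall>e>0. eventually (\<lambda>n. \<forall>s\<in>{0..T}. dist (q n (lam n s) $ a $ b) (F a b s) \<le> e) sequentially)"
    for a b and lam :: "nat \<Rightarrow> real \<Rightarrow> real"
  have ex: "\<exists>lam. P a b lam" for a b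
    using F[of a b] unfolding skorokhod_tendsto_def P_def by (elim conjE) assumption
  have "\<forall>a. \<exists>g. \<forall>b. P a b (g b)"
  proof
    fix a show "\<exists>g. \<forall>b. P a b (g b)" by (rule choice) (use ex in blast)
  qed
  hence "\<exists>\<mu>. \<forall>a. \<forall>b. P a b (\<mu> a b)" by (rule choice)
  then obtain \<mu> where muP: "\<And>a b. P a b (\<mu> a b)" by blast
  have mu: "\<And>a b. (\<forall>n. \<mu> a b n \<in> time_changes) \<and>
        (\<forall>T>0. \<forall>e>0. eventually (\<lambda>n. \<forall>s\<in>{0..T}. \<bar>\<mu> a b n s - s\<bar> \<le> e) sequentially) \<and>
        (\<forall>T>0. \<forall>e>0. eventually (\<lambda>n. \<forall>s\<in>{0..T}. dist (q n (\<mu> a b n s) $ a $ b) (F a b s) \<le> e) sequentially)"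
    using muP unfolding P_def .
  have cq: "\<forall>n. cadlag (q n)"
  proof
    fix n
    show "cadlag (q n)"
    proof (rule cadlag_from_entries)
      fix a b show "cadlag (\<lambda>s. q n s $ a $ b)" using F[of a b] unfolding skorokhod_tendsto_def by (elim conjE) simp
    qed
  qed
  have cF: "cadlag (F a b)" for a b using F[of a b] unfolding skorokhod_tendsto_def by (elim conjE) simp
  have cQ: "cadlag (\<lambda>s. \<chi> a b. F a b s)"
    by (rule cadlag_from_entries) (simp add: cF)
  have "skorokhod_tendsto q (\<lambda>s. \<chi> a b. F a b s)"
  proof (rule sk_local[OF cq cQ])
    fix T e :: real assume T: "T > 0" and e: "e > 0"
    show "eventually (\<lambda>n. \<exists>lam\<in>time_changes.
      (\<forall>s\<in>{0..T}. \<bar>lam s - s\<bar> \<le> e) \<and> (\<forall>s\<in>{0..T}. dist (q n (lam s)) (\<chi> a b. F a b s) \<le> e)) sequentially"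
      unfolding q_def
    proof (rule local_step[OF assms, where \<mu> = \<mu> and F = F, OF _ _ _ cF T e])
      show "\<And>a b n. \<mu> a b n \<in> time_changes" using mu by blast
      show "\<And>a b T e. T > 0 \<Longrightarrow> e > 0 \<Longrightarrow> eventually (\<lambda>n. \<forall>s\<in>{0..T}. \<bar>\<mu> a b n s - s\<bar> \<le> e) sequentially"
        using mu by blast
      show "\<And>a b T e. T > 0 \<Longrightarrow> e > 0 \<Longrightarrow>
      eventually (\<lambda>n. \<forall>s\<in>{0..T}. \<bar>qv_matrix t k x n (\<mu> a b n s) $ a $ b - F a b s\<bar> \<le> e) sequentially"
        using mu unfolding q_def dist_real_def by blast
    qed
  qed
  thus "skorokhod_convergent (qv_matrix t k x)" unfolding skorokhod_convergent_def q_def by blast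
qed


end
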